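(* Let $M \subseteq \mathrm{Inj}(\Omega)$ be a normal submonoid. Then $M \cap \mathrm{Sym}(\Omega)$ is a normal subgroup of $\mathrm{Sym}(\Omega)$ (in particular it is closed under inverses).
   Context: $\Omega$ is a countably infinite set; $\mathrm{Inj}(\Omega)$ is the monoid of all injective maps $\Omega\to\Omega$ under composition and $\mathrm{Sym}(\Omega)$ the group of all permutations of $\Omega$. A subset of $\mathrm{Inj}(\Omega)$ is normal if it is closed under $f\mapsto afa^{-1}$ for all $a\in\mathrm{Sym}(\Omega)$. *)

theory Defs
  imports Main "HOL-Library.Countable_Set" "HOL-Algebra.Bij" "HOL-Algebra.Coset"
begin

definition Inj_set :: "('a \<Rightarrow> 'a) set" where
  "Inj_set = {f. inj f}"

definition Sym_set :: "('a \<Rightarrow> 'a) set" where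
  "Sym_set = {f. bij f}"

definition inj_submonoid :: "('a \<Rightarrow> 'a) set \<Rightarrow> bool" where
  "inj_submonoid M \<longleftrightarrow> M \<subseteq> Inj_set \<and> id \<in> M \<and> (\<forall>f\<in>M. \<forall>g\<in>M. f \<circ> g \<in> M)"

definition normal_set :: "('a \<Rightarrow> 'a) set \<Rightarrow> bool" where
  "normal_set M \<longleftrightarrow> (\<forall>a\<in>Sym_set. \<forall>f\<in>M. a \<circ> f \<circ> Hilbert_Choice.inv a \<in> M)"

end

theory Submission
  imports Defs
begin

lemma conj_inv_abstract:
  fixes P :: "int \<Rightarrow> 'a \<Rightarrow> 'a"
  assumes add: "\<And>m n y. P (m + n) y = P m (P n y)" and zero: "\<And>y. P 0 y = y"
  shows "\<exists>a. a \<circ> a = id \<and> (\<forall>y. a (P 1 y) = P (-1) (a y))"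
proof -
  define orb where "orb y = {z. \<exists>n. z = P n y}" for y
  define rep where "rep y = (SOME r. r \<in> orb y)" for y
  define k where "k y = (SOME n. y = P n (rep y))" for y
  define a where "a y = P (- k y) (rep y)" for y
  have inv1: "P (-n) (P n y) = y" for n y by (metis add zero add.commute right_minus)
  have orbeq: "orb z = orb y" if zin: "z \<in> orb y" for y z
  proof -
    obtain n where z: "z = P n y" using zin unfolding orb_def by auto
    have y: "y = P (-n) z" using z inv1 by simp
    have 1: "w \<in> orb y" if wz: "w \<in> orb z" for w
    proof -
      obtain m where "w = P m z" using wz unfolding orb_def by auto
      hence "w = P (m + n) y" using z add by simp
      thus ?thesis unfolding orb_def by blast
    qed
    have 2: "w \<in> orb z" if wy: "w \<in> orb y" for w
    proof -
      obtain m where "w = P m y" using wy unfolding orb_def by auto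
      hence "w = P m (P (-n) z)" using y by simp
      moreover have "P (m + -n) z = P m (P (-n) z)" by (rule add)
      ultimately have "w = P (m + -n) z" by simp
      thus ?thesis unfolding orb_def by blast
    qed
    show ?thesis using 1 2 by blast
  qed
  have self: "y \<in> orb y" for y unfolding orb_def using zero by (metis (mono_tags) mem_Collect_eq)
  have repin: "rep y \<in> orb y" for y unfolding rep_def using self by (meson someI)
  have repeq: "rep z = rep y" if "z \<in> orb y" for y z unfolding rep_def using orbeq[OF that] by simp
  have exk: "\<exists>n. y = P n (rep y)" for y
  proof -
    obtain n where "rep y = P n y" using repin[of y] unfolding orb_def by auto
    hence "y = P (-n) (rep y)" using inv1 by simp
    thus ?thesis by blast
  qed
  have wd: "P (-n) r = P (-m) r" if "P n r = P m r" for n m r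
  proof -
    have e1: "-n-m+n = -m" by simp
    have e2: "-n-m+m = -n" by simp
    have "P (-m) r = P (-n-m+n) r" using e1 by simp
    also have "\<dots> = P (-n-m) (P n r)" by (rule add)
    also have "\<dots> = P (-n-m) (P m r)" using that by simp
    also have "\<dots> = P (-n-m+m) r" by (rule add[symmetric])
    also have "\<dots> = P (-n) r" using e2 by simp
    finally show ?thesis by (rule sym)
  qed
  have char: "a y = P (-n) (rep y)" if "y = P n (rep y)" for y n
  proof -
    have "y = P (k y) (rep y)" unfolding k_def using exk[of y] by (rule someI_ex)
    with that have "P (k y) (rep y) = P n (rep y)" by simp
    from wd[OF this] show ?thesis unfolding a_def .
  qed
  have aa: "a (a y) = y" for y
  proof -
    obtain n where n: "y = P n (rep y)" using exk by blast
    have ay: "a y = P (-n) (rep y)" using char[OF n] .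
    have "rep y \<in> orb y" by (rule repin)
    hence "orb (rep y) = orb y" by (rule orbeq)
    moreover have "a y \<in> orb (rep y)" unfolding orb_def using ay by blast
    ultimately have "rep (a y) = rep y" using repeq by auto
    hence "a y = P (-n) (rep (a y))" using ay by simp
    hence "a (a y) = P (- (-n)) (rep (a y))" by (rule char)
    thus ?thesis using n \<open>rep (a y) = rep y\<close> by simp
  qed
  have af: "a (P 1 y) = P (-1) (a y)" for y
  proof -
    obtain n where n: "y = P n (rep y)" using exk by blast
    have "P 1 y \<in> orb y" unfolding orb_def by blast
    hence r: "rep (P 1 y) = rep y" by (rule repeq)
    have "P 1 y = P (1 + n) (rep (P 1 y))" using n r add by metis
    hence "a (P 1 y) = P (-(1+n)) (rep y)" using char r by metis
    also have "\<dots> = P (-1) (P (-n) (rep y))" using add by (metis minus_add_distrib)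
    also have "\<dots> = P (-1) (a y)" using char[OF n] by simp
    finally show ?thesis .
  qed
  show ?thesis using aa af by (intro exI[of _ a]) auto
qed

lemma conj_inv:
  fixes f :: "'a \<Rightarrow> 'a"
  assumes "bij f"
  shows "\<exists>a. bij a \<and> a \<circ> f \<circ> Hilbert_Choice.inv a = Hilbert_Choice.inv f"
proof -
  let ?G = "BijGroup (UNIV :: 'a set)"
  interpret G: group ?G by (rule group_BijGroup)
  have fG: "f \<in> carrier ?G" using assms by (simp add: BijGroup_def Bij_def)
  define P where "P n = f [^]\<^bsub>?G\<^esub> (n::int)" for n
  have mult: "(g \<otimes>\<^bsub>?G\<^esub> h) y = g (h y)" if "g \<in> carrier ?G" "h \<in> carrier ?G" for g h y
    using that by (simp add: BijGroup_def compose_def)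
  have add: "P (m + n) y = P m (P n y)" for m n y
    unfolding P_def using G.int_pow_mult[OF fG, of m n] mult fG by simp
  have zero: "P 0 y = y" for y unfolding P_def by (simp add: BijGroup_def)
  have one: "P 1 = f" unfolding P_def using fG by simp
  have m1: "P (-1) y = Hilbert_Choice.inv f y" for y
    unfolding P_def using G.int_pow_neg[OF fG, of 1] G.int_pow_1[OF fG] fG inv_BijGroup[of f UNIV]
    by (simp add: BijGroup_def)
  obtain a where a: "a \<circ> a = id" "\<forall>y. a (P 1 y) = P (-1) (a y)"
    using conj_inv_abstract[OF add zero] by blast
  have ia: "Hilbert_Choice.inv a = a" using a(1) by (simp add: inv_unique_comp)
  have ba: "bij a" using a(1) by (metis bij_betw_def inj_on_id o_bij surj_id comp_id)
  have "a \<circ> f \<circ> a = Hilbert_Choice.inv f"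
  proof
    fix y
    have "(a \<circ> f \<circ> a) y = Hilbert_Choice.inv f (a (a y))" using a(2) one m1 by simp
    also have "\<dots> = Hilbert_Choice.inv f y" using a(1) by (metis comp_apply id_apply)
    finally show "(a \<circ> f \<circ> a) y = Hilbert_Choice.inv f y" .
  qed
  thus ?thesis using ba ia by auto
qed

theorem mainTheorem2:
  fixes M :: "('a \<Rightarrow> 'a) set"
  assumes "countable (UNIV :: 'a set)" and "infinite (UNIV :: 'a set)"
    and "inj_submonoid M" and "normal_set M"
  shows "M \<inter> Sym_set \<lhd> BijGroup (UNIV :: 'a set)"
proof -
  let ?G = "BijGroup (UNIV :: 'a set)"
  interpret G: group ?G by (rule group_BijGroup)
  have M: "id \<in> M" "\<And>f g. f \<in> M \<Longrightarrow> g \<in> M \<Longrightarrow> f \<circ> g \<in> M"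
    using assms(3) unfolding inj_submonoid_def by auto
  have N: "\<And>a f. bij a \<Longrightarrow> f \<in> M \<Longrightarrow> a \<circ> f \<circ> Hilbert_Choice.inv a \<in> M"
    using assms(4) unfolding normal_set_def Sym_set_def by auto
  have car: "carrier ?G = Sym_set" by (auto simp: BijGroup_def Bij_def Sym_set_def)
  have mult: "g \<otimes>\<^bsub>?G\<^esub> h = g \<circ> h" if "g \<in> carrier ?G" "h \<in> carrier ?G" for g h
    using that by (auto simp: BijGroup_def compose_def)
  have invG: "inv\<^bsub>?G\<^esub> g = Hilbert_Choice.inv g" if "g \<in> carrier ?G" for g
    using that inv_BijGroup[of g UNIV] by (auto simp: BijGroup_def)
  have oneG: "\<one>\<^bsub>?G\<^esub> = id" by (auto simp: BijGroup_def)
  have invM: "Hilbert_Choice.inv f \<in> M" if "f \<in> M" "bij f" for f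
    using conj_inv[OF that(2)] N that(1) by metis
  have sub: "subgroup (M \<inter> Sym_set) ?G"
  proof
    show "M \<inter> Sym_set \<subseteq> carrier ?G" using car by auto
    show "x \<otimes>\<^bsub>?G\<^esub> y \<in> M \<inter> Sym_set" if "x \<in> M \<inter> Sym_set" "y \<in> M \<inter> Sym_set" for x y
      using that mult car M(2) by (auto simp: Sym_set_def bij_comp)
    show "\<one>\<^bsub>?G\<^esub> \<in> M \<inter> Sym_set" using oneG M(1) by (auto simp: Sym_set_def)
    show "inv\<^bsub>?G\<^esub> x \<in> M \<inter> Sym_set" if "x \<in> M \<inter> Sym_set" for x
      using that invG car invM by (auto simp: Sym_set_def bij_imp_bij_inv)
  qed
  show ?thesis unfolding G.normal_inv_iff
  proof (intro conjI sub ballI)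
    fix x h assume x: "x \<in> carrier ?G" and h: "h \<in> M \<inter> Sym_set"
    have hc: "h \<in> carrier ?G" using h car by auto
    have "x \<otimes>\<^bsub>?G\<^esub> h \<otimes>\<^bsub>?G\<^esub> inv\<^bsub>?G\<^esub> x = x \<circ> h \<circ> Hilbert_Choice.inv x"
    proof -
      have "x \<otimes>\<^bsub>?G\<^esub> h = x \<circ> h" using x hc mult by simp
      moreover have "x \<otimes>\<^bsub>?G\<^esub> h \<in> carrier ?G" using x hc by simp
      moreover have "inv\<^bsub>?G\<^esub> x \<in> carrier ?G" using x by simp
      ultimately have "x \<otimes>\<^bsub>?G\<^esub> h \<otimes>\<^bsub>?G\<^esub> inv\<^bsub>?G\<^esub> x = (x \<circ> h) \<circ> inv\<^bsub>?G\<^esub> x"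
        using mult by metis
      thus ?thesis using invG[OF x] by simp
    qed
    moreover have "x \<circ> h \<circ> Hilbert_Choice.inv x \<in> M" using N x h car by (auto simp: Sym_set_def)
    moreover have "bij (x \<circ> h \<circ> Hilbert_Choice.inv x)" using x h car
      by (auto simp: Sym_set_def intro!: bij_comp bij_imp_bij_inv)
    ultimately show "x \<otimes>\<^bsub>?G\<^esub> h \<otimes>\<^bsub>?G\<^esub> inv\<^bsub>?G\<^esub> x \<in> M \<inter> Sym_set"
      by (simp add: Sym_set_def)
  qed
qed

end
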